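(* For the two-species competition model on $\mathbb{Z}$ (i.e. $d=1$), for every nondegenerate finite initial configuration ($R(0)$, $B(0)$ finite, disjoint, both nonempty), the event $\{R(t)\ne\emptyset\text{ and }B(t)\ne\emptyset\text{ for all }t\ge0\}$ of mutual survival has positive probability.
   Context: The two-species competition model on $\mathbb{Z}^d$ is the continuous-time Markov process $(R(t),B(t))_{t\ge0}$ whose state is a pair of disjoint subsets of $\mathbb{Z}^d$ ($R(t)$: Red sites, $B(t)$: Blue sites; other sites unoccupied). An unoccupied site becomes Red at rate equal to its number of Red nearest neighbours and Blue at rate equal to its number of Blue nearest neighbours; an occupied site flips to the opposite colour at rate equal to its number of nearest neighbours of the opposite colour; occupied sites never become unoccupied. *)

theory Defs
  imports "HOL-Probability.Probability"
begin

text \<open>Two-species competition model on the integer lattice Z (d = 1).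
  A configuration is a pair (R, B) of disjoint finite sets of sites (Red, Blue).\<close>

type_synonym config = "int set \<times> int set"

definition nbrs :: "int \<Rightarrow> int set" where
  "nbrs x = {x - 1, x + 1}"

text \<open>Rate at which site x becomes Red: its number of Red neighbours (if it is
  not already Red; this covers unoccupied sites and Blue-to-Red flips). Same for Blue.\<close>
definition red_rate :: "config \<Rightarrow> int \<Rightarrow> nat" where
  "red_rate c x = (if x \<in> fst c then 0 else card (nbrs x \<inter> fst c))"

definition blue_rate :: "config \<Rightarrow> int \<Rightarrow> nat" where
  "blue_rate c x = (if x \<in> snd c then 0 else card (nbrs x \<inter> snd c))"

definition make_red :: "config \<Rightarrow> int \<Rightarrow> config" where
  "make_red c x = (insert x (fst c), snd c - {x})"

definition make_blue :: "config \<Rightarrow> int \<Rightarrow> config" where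
  "make_blue c x = (fst c - {x}, insert x (snd c))"

text \<open>Sites that can possibly change: neighbours of occupied sites (finite for
  finite configurations).\<close>
definition active_sites :: "config \<Rightarrow> int set" where
  "active_sites c = (\<Union>y \<in> fst c \<union> snd c. nbrs y)"

text \<open>Multiset of transitions, each target configuration counted with
  multiplicity equal to its (integer) rate.\<close>
definition moves :: "config \<Rightarrow> config multiset" where
  "moves c = (\<Sum>x \<in> active_sites c.
      replicate_mset (red_rate c x) (make_red c x) + replicate_mset (blue_rate c x) (make_blue c x))"

definition total_rate :: "config \<Rightarrow> nat" where
  "total_rate c = size (moves c)"

definition jump_kernel :: "config \<Rightarrow> config pmf" where
  "jump_kernel c = (if moves c = {#} then return_pmf c else pmf_of_multiset (moves c))"

text \<open>Standard (jump chain / holding time) description of the continuous-time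
  Markov chain started at c0: on a probability space M, Y n is the n-th visited
  state and S n the holding time in it.  The joint law of
  (Y 0, ..., Y n, S 0, ..., S (n-1)) is that of the jump chain with kernel
  jump_kernel, holding times being conditionally independent exponentials with
  rate total_rate (Y k).\<close>
definition is_competition_process ::
    "'w measure \<Rightarrow> config \<Rightarrow> (nat \<Rightarrow> 'w \<Rightarrow> config) \<Rightarrow> (nat \<Rightarrow> 'w \<Rightarrow> real) \<Rightarrow> bool" where
  "is_competition_process M c0 Y S \<longleftrightarrow>
     prob_space M \<and>
     (\<forall>n. Y n \<in> measurable M (count_space UNIV)) \<and>
     (\<forall>n. S n \<in> borel_measurable M) \<and>
     (\<forall>n (h :: nat \<Rightarrow> config) (s :: nat \<Rightarrow> real). (\<forall>k<n. 0 \<le> s k) \<longrightarrow>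
        measure M {w \<in> space M. (\<forall>k\<le>n. Y k w = h k) \<and> (\<forall>k<n. s k < S k w)} =
          (if h 0 = c0 then 1 else 0) *
          (\<Prod>k<n. pmf (jump_kernel (h k)) (h (Suc k)) * exp (- real (total_rate (h k)) * s k)))"

definition jump_time :: "(nat \<Rightarrow> 'w \<Rightarrow> real) \<Rightarrow> nat \<Rightarrow> 'w \<Rightarrow> real" where
  "jump_time S n w = (\<Sum>k<n. S k w)"

definition state_at :: "(nat \<Rightarrow> 'w \<Rightarrow> config) \<Rightarrow> (nat \<Rightarrow> 'w \<Rightarrow> real) \<Rightarrow> real \<Rightarrow> 'w \<Rightarrow> config \<Rightarrow> bool" where
  "state_at Y S t w c \<longleftrightarrow>
     (\<exists>n. jump_time S n w \<le> t \<and> t < jump_time S (Suc n) w \<and> Y n w = c)"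

text \<open>Mutual survival: at every time t \<ge> 0 (at which the process is defined)
  both colours are present.\<close>
definition mutual_survival ::
    "'w measure \<Rightarrow> (nat \<Rightarrow> 'w \<Rightarrow> config) \<Rightarrow> (nat \<Rightarrow> 'w \<Rightarrow> real) \<Rightarrow> 'w set" where
  "mutual_survival M Y S = {w \<in> space M. \<forall>t\<ge>0. \<forall>c. state_at Y S t w c \<longrightarrow>
       fst c \<noteq> {} \<and> snd c \<noteq> {}}"

end

theory Submission
  imports Defs
begin

definition good :: "config \<Rightarrow> bool" where
  "good c \<longleftrightarrow> fst c \<noteq> {} \<and> snd c \<noteq> {}"

lemma image_mset_sum_gen: "image_mset f (sum g A) = (\<Sum>x\<in>A. image_mset f (g x))"
  by (induct A rule: infinite_finite_induct) auto

lemma active_sites_swap: "active_sites (prod.swap c) = active_sites c"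
  by (cases c) (auto simp: active_sites_def)

lemma moves_swap: "moves (prod.swap c) = image_mset prod.swap (moves c)"
proof -
  obtain R B where c: "c = (R, B)" by (cases c)
  show ?thesis unfolding moves_def image_mset_sum_gen active_sites_swap
    by (rule sum.cong) (auto simp: c red_rate_def blue_rate_def make_red_def make_blue_def)
qed

lemma sum_pmf_of_multiset:
  assumes "M \<noteq> {#}"
  shows "(\<Sum>x\<in>set_mset M. pmf (pmf_of_multiset M) x * g x) = (\<Sum>x\<in>#M. g x) / size M"
proof -
  have "(\<Sum>x\<in>set_mset M. pmf (pmf_of_multiset M) x * g x) = (\<Sum>x\<in>set_mset M. real (count M x) * g x) / size M"
    using assms by (simp add: sum_divide_distrib)
  also have "(\<Sum>x\<in>set_mset M. real (count M x) * g x) = (\<Sum>x\<in>#M. g x)"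
  proof (induct M)
    case empty then show ?case by simp
  next
    case (add x M)
    show ?case
    proof (cases "x \<in># M")
      case True
      then have "set_mset (add_mset x M) = set_mset M" by auto
      have "(\<Sum>y\<in>set_mset M. real (count (add_mset x M) y) * g y) =
            (\<Sum>y\<in>set_mset M. real (count M y) * g y + (if y = x then g y else 0))"
        by (intro sum.cong) (auto simp: algebra_simps)
      also have "\<dots> = (\<Sum>y\<in>set_mset M. real (count M y) * g y) + g x"
        using True by (simp add: sum.distrib)
      finally show ?thesis using add True \<open>set_mset (add_mset x M) = set_mset M\<close>
        by simp
    next
      case False
      then have "(\<Sum>y\<in>set_mset M. real (count (add_mset x M) y) * g y) = (\<Sum>y\<in>set_mset M. real (count M y) * g y)"
        by (intro sum.cong) auto
      then show ?thesis using add False by (simp add: algebra_simps not_in_iff)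
    qed
  qed
  finally show ?thesis .
qed


fun W :: "nat \<Rightarrow> config \<Rightarrow> real" where
  "W 0 c = (if good c then 1 else 0)"
| "W (Suc n) c = (if good c then (\<Sum>c'\<in>set_pmf (jump_kernel c). pmf (jump_kernel c) c' * W n c') else 0)"

lemma finite_set_K: "finite (set_pmf (jump_kernel c))"
  by (auto simp: jump_kernel_def)

lemma W_nonneg: "0 \<le> W n c"
  by (induct n arbitrary: c) (auto intro!: sum_nonneg)

lemma W_le_1: "W n c \<le> 1"
proof (induct n arbitrary: c)
  case 0 then show ?case by simp
next
  case (Suc n)
  have "(\<Sum>c'\<in>set_pmf (jump_kernel c). pmf (jump_kernel c) c' * W n c') \<le> (\<Sum>c'\<in>set_pmf (jump_kernel c). pmf (jump_kernel c) c')"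
    by (intro sum_mono) (simp add: Suc mult_left_le)
  also have "\<dots> = 1" using finite_set_K sum_pmf_eq_1 by (metis order_refl)
  finally show ?case by simp
qed

lemma pmf_K_pos: "c' \<in># moves c \<Longrightarrow> 0 < pmf (jump_kernel c) c'"
  by (auto simp: jump_kernel_def total_rate_def nonempty_has_size)

lemma W_step: "good c \<Longrightarrow> c' \<in># moves c \<Longrightarrow> pmf (jump_kernel c) c' * W n c' \<le> W (Suc n) c"
proof -
  assume g: "good c" and m: "c' \<in># moves c"
  then have "c' \<in> set_pmf (jump_kernel c)" using pmf_K_pos[OF m] by (simp add: set_pmf_eq')
  then show ?thesis using g
    by (simp, intro member_le_sum) (auto simp: W_nonneg finite_set_K)
qed

inductive reach :: "config \<Rightarrow> config \<Rightarrow> bool" where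
  refl: "reach c c"
| step: "good c \<Longrightarrow> c' \<in># moves c \<Longrightarrow> reach c' c'' \<Longrightarrow> reach c c''"

lemma reach_W: "reach c c' \<Longrightarrow> \<exists>p>0. \<exists>m. \<forall>n. p * W n c' \<le> W (n + m) c"
proof (induct rule: reach.induct)
  case (refl c)
  show ?case by (rule exI[of _ 1], simp, rule exI[of _ 0]) simp
next
  case (step c c' c'')
  then obtain p m where p: "p > 0" "\<And>n. p * W n c'' \<le> W (n + m) c'" by blast
  define q where "q = pmf (jump_kernel c) c'"
  have q: "q > 0" using pmf_K_pos[OF step(2)] q_def by simp
  have *: "q * p * W n c'' \<le> W (n + Suc m) c" for n
  proof -
    have "q * p * W n c'' \<le> q * W (n + m) c'" using p q by (simp add: mult.assoc)
    also have "\<dots> \<le> W (Suc (n + m)) c" unfolding q_def by (rule W_step[OF step(1,2)])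
    finally show ?thesis by simp
  qed
  show ?case using p q * by (intro exI[of _ "q * p"] conjI exI[of _ "Suc m"]) auto
qed

lemma reach_trans: "reach a b \<Longrightarrow> reach b c \<Longrightarrow> reach a c"
  by (induct rule: reach.induct) (simp, metis reach.step)

lemma reach_snoc: "reach a b \<Longrightarrow> good b \<Longrightarrow> c \<in># moves b \<Longrightarrow> reach a c"
  by (erule reach_trans) (metis reach.intros)

lemma good_swap[simp]: "good (prod.swap c) = good c"
  by (auto simp: good_def)

lemma reach_swap: "reach a b \<Longrightarrow> reach (prod.swap a) (prod.swap b)"
proof (induct rule: reach.induct)
  case (refl c) then show ?case by (rule reach.refl)
next
  case (step c c' c'')
  have "prod.swap c' \<in># moves (prod.swap c)" using step(2) by (simp add: moves_swap)
  moreover have "good (prod.swap c)" using step(1) by simp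
  ultimately show ?case using step(4) by (metis reach.step)
qed

lemma finite_active: "finite (fst c) \<Longrightarrow> finite (snd c) \<Longrightarrow> finite (active_sites c)"
  by (auto simp: active_sites_def nbrs_def)

lemma red_move:
  assumes "finite (fst c)" "finite (snd c)" "x \<notin> fst c" "x - 1 \<in> fst c \<or> x + 1 \<in> fst c"
  shows "make_red c x \<in># moves c"
proof -
  have xa: "x \<in> active_sites c"
  proof (cases "x - 1 \<in> fst c")
    case True
    have "x \<in> nbrs (x - 1)" by (simp add: nbrs_def)
    then show ?thesis using True unfolding active_sites_def by blast
  next
    case False
    then have "x + 1 \<in> fst c" using assms(4) by blast
    moreover have "x \<in> nbrs (x + 1)" by (simp add: nbrs_def)
    ultimately show ?thesis unfolding active_sites_def by blast
  qed
  have "nbrs x \<inter> fst c \<noteq> {}" using assms(4) by (auto simp: nbrs_def)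
  then have "red_rate c x > 0" using assms(3) by (simp add: red_rate_def nbrs_def card_gt_0_iff)
  then have "make_red c x \<in># replicate_mset (red_rate c x) (make_red c x) + replicate_mset (blue_rate c x) (make_blue c x)"
    by simp
  then have "make_red c x \<in> (\<Union>y\<in>active_sites c. set_mset (replicate_mset (red_rate c y) (make_red c y) + replicate_mset (blue_rate c y) (make_blue c y)))"
    using xa by blast
  then show ?thesis unfolding moves_def using finite_active[OF assms(1,2)]
    by (subst set_mset_sum) auto
qed

lemma blue_move:
  assumes "finite (fst c)" "finite (snd c)" "x \<notin> snd c" "x - 1 \<in> snd c \<or> x + 1 \<in> snd c"
  shows "make_blue c x \<in># moves c"
proof -
  have xa: "x \<in> active_sites c"
  proof (cases "x - 1 \<in> snd c")
    case True
    have "x \<in> nbrs (x - 1)" by (simp add: nbrs_def)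
    then show ?thesis using True unfolding active_sites_def by blast
  next
    case False
    then have "x + 1 \<in> snd c" using assms(4) by blast
    moreover have "x \<in> nbrs (x + 1)" by (simp add: nbrs_def)
    ultimately show ?thesis unfolding active_sites_def by blast
  qed
  have "nbrs x \<inter> snd c \<noteq> {}" using assms(4) by (auto simp: nbrs_def)
  then have "blue_rate c x > 0" using assms(3) by (simp add: blue_rate_def nbrs_def card_gt_0_iff)
  then have "make_blue c x \<in># replicate_mset (red_rate c x) (make_red c x) + replicate_mset (blue_rate c x) (make_blue c x)"
    by simp
  then have "make_blue c x \<in> (\<Union>y\<in>active_sites c. set_mset (replicate_mset (red_rate c y) (make_red c y) + replicate_mset (blue_rate c y) (make_blue c y)))"
    using xa by blast
  then show ?thesis unfolding moves_def using finite_active[OF assms(1,2)]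
    by (subst set_mset_sum) auto
qed


definition iface :: "config \<Rightarrow> bool" where
  "iface c \<longleftrightarrow> (\<exists>a m e::int. a \<le> m + 1 \<and> m \<le> e \<and>
      (c = ({a..m}, {m+1..e}) \<or> c = ({m+1..e}, {a..m})))"

definition phi :: "config \<Rightarrow> real" where
  "phi c = (if iface c then 1 - (1/2) ^ card (fst c) - (1/2) ^ card (snd c) else 0)"

lemma iface_swap[simp]: "iface (prod.swap c) = iface c"
  unfolding iface_def by (cases c) auto

lemma iface_swap': "iface (b, a) = iface (a, b)"
  using iface_swap[of "(a, b)"] by simp

lemma phi_swap[simp]: "phi (prod.swap c) = phi c"
  unfolding phi_def by (cases c) (auto simp: iface_swap')

lemma phi_swap': "phi (b, a) = phi (a, b)"
  using phi_swap[of "(a, b)"] by simp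

lemma phi_le_1: "phi c \<le> 1"
proof -
  have "0 \<le> (1/2::real) ^ k" for k by simp
  then show ?thesis unfolding phi_def by (smt (verit))
qed

lemma phi_bad: "\<not> good c \<Longrightarrow> phi c \<le> 0"
  unfolding phi_def good_def by auto

lemma red_rate_iface:
  assumes "a \<le> m" "m < e"
  shows "red_rate ({a..m}, {m+1..e}) x = (if x = a - 1 \<or> x = m + 1 then 1 else 0)"
proof -
  consider "x \<in> {a..m}" | "x = a - 1" | "x = m + 1" | "x < a - 1 \<or> x > m + 1" by force
  then show ?thesis
  proof cases
    case 2
    then have "nbrs x \<inter> {a..m} = {a}" using assms by (auto simp: nbrs_def)
    then show ?thesis using 2 by (simp add: red_rate_def)
  next
    case 3
    then have "nbrs x \<inter> {a..m} = {m}" using assms by (auto simp: nbrs_def)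
    then show ?thesis using 3 by (simp add: red_rate_def)
  next
    case 4
    then have "x - 1 \<notin> {a..m}" "x + 1 \<notin> {a..m}" by auto
    then have "nbrs x \<inter> {a..m} = {}" by (auto simp: nbrs_def)
    moreover have "\<not> (x = a - 1 \<or> x = m + 1)" using 4 assms by auto
    ultimately show ?thesis by (simp add: red_rate_def)
  next
    case 1
    moreover have "\<not> (x = a - 1 \<or> x = m + 1)" using 1 by auto
    ultimately show ?thesis by (simp add: red_rate_def)
  qed
qed

lemma blue_rate_iface:
  assumes "a \<le> m" "m < e"
  shows "blue_rate ({a..m}, {m+1..e}) x = (if x = m \<or> x = e + 1 then 1 else 0)"
proof -
  consider "x \<in> {m+1..e}" | "x = m" | "x = e + 1" | "x < m \<or> x > e + 1" by force
  then show ?thesis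
  proof cases
    case 2
    then have "nbrs x \<inter> {m+1..e} = {m+1}" using assms by (auto simp: nbrs_def)
    then show ?thesis using 2 by (simp add: blue_rate_def)
  next
    case 3
    then have "nbrs x \<inter> {m+1..e} = {e}" using assms by (auto simp: nbrs_def)
    then show ?thesis using 3 by (simp add: blue_rate_def)
  next
    case 4
    then have "x - 1 \<notin> {m+1..e}" "x + 1 \<notin> {m+1..e}" by auto
    then have "nbrs x \<inter> {m+1..e} = {}" by (auto simp: nbrs_def)
    moreover have "\<not> (x = m \<or> x = e + 1)" using 4 assms by auto
    ultimately show ?thesis by (simp add: blue_rate_def)
  next
    case 1
    moreover have "\<not> (x = m \<or> x = e + 1)" using 1 by auto
    ultimately show ?thesis by (simp add: blue_rate_def)
  qed
qed

lemma moves_iface: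
  assumes "a \<le> m" "m < e"
  shows "moves ({a..m}, {m+1..e}) =
    {# ({a-1..m}, {m+1..e}), ({a..m+1}, {m+2..e}), ({a..m-1}, {m..e}), ({a..m}, {m+1..e+1}) #}"
proof -
  define c where "c = ({a..m}, {m+1..e})"
  define f where "f x = replicate_mset (red_rate c x) (make_red c x) + replicate_mset (blue_rate c x) (make_blue c x)" for x
  have fin: "finite (active_sites c)" unfolding c_def by (rule finite_active) auto
  have sub: "{a - 1, m + 1, m, e + 1} \<subseteq> active_sites c"
  proof -
    have "a - 1 \<in> nbrs a" "m + 1 \<in> nbrs m" "m \<in> nbrs (m+1)" "e + 1 \<in> nbrs e" by (auto simp: nbrs_def)
    moreover have "a \<in> fst c \<union> snd c" "m \<in> fst c \<union> snd c" "m + 1 \<in> fst c \<union> snd c" "e \<in> fst c \<union> snd c"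
      using assms by (auto simp: c_def)
    ultimately show ?thesis unfolding active_sites_def by blast
  qed
  have z: "f x = {#}" if "x \<notin> {a - 1, m + 1, m, e + 1}" for x
    using that assms unfolding f_def c_def by (simp add: red_rate_iface blue_rate_iface)
  have "moves c = sum f (active_sites c)" unfolding moves_def f_def by simp
  also have "\<dots> = sum f {a - 1, m + 1, m, e + 1}"
    by (rule sum.mono_neutral_right[OF fin sub]) (auto intro: z)
  also have "\<dots> = f (a - 1) + f (m + 1) + f m + f (e + 1)"
    using assms by (simp add: algebra_simps)
  also have "\<dots> = {# make_red c (a - 1), make_red c (m + 1), make_blue c m, make_blue c (e + 1) #}"
    using assms unfolding f_def c_def by (simp add: red_rate_iface blue_rate_iface)
  also have "\<dots> = {# ({a-1..m}, {m+1..e}), ({a..m+1}, {m+2..e}), ({a..m-1}, {m..e}), ({a..m}, {m+1..e+1}) #}"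
  proof -
    have "make_red c (a - 1) = ({a-1..m}, {m+1..e})" using assms by (auto simp: make_red_def c_def)
    moreover have "make_red c (m + 1) = ({a..m+1}, {m+2..e})" using assms by (auto simp: make_red_def c_def)
    moreover have "make_blue c m = ({a..m-1}, {m..e})" using assms by (auto simp: make_blue_def c_def)
    moreover have "make_blue c (e + 1) = ({a..m}, {m+1..e+1})" using assms by (auto simp: make_blue_def c_def)
    ultimately show ?thesis by simp
  qed
  finally show ?thesis unfolding c_def .
qed


lemma iface_intro: "a \<le> m + 1 \<Longrightarrow> m \<le> e \<Longrightarrow> iface ({a..m}, {m+1..e})"
  unfolding iface_def by blast

lemma phi_iface: "a \<le> m + 1 \<Longrightarrow> m \<le> e \<Longrightarrow>
    phi ({a..m}, {m+1..e}) = 1 - (1/2) ^ nat (m - a + 1) - (1/2) ^ nat (e - m)"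
  using iface_intro[of a m e] by (simp add: phi_def)

lemma phi_sum_iface:
  assumes "a \<le> m" "m < e"
  shows "(\<Sum>x\<in>#moves ({a..m}, {m+1..e}). phi x) = 4 * phi ({a..m}, {m+1..e})"
proof -
  define r where "r = nat (m - a)"
  define b where "b = nat (e - m - 1)"
  have r: "m - a = int r" using assms(1) by (simp add: r_def)
  have b: "e - m - 1 = int b" using assms(2) by (simp add: b_def)
  have n1: "nat (m - (a - 1) + 1) = Suc (Suc r)" "nat (e - m) = Suc b" "nat (m + 1 - a + 1) = Suc (Suc r)"
    "nat (e - (m + 1)) = b" "nat (m - 1 - a + 1) = r" "nat (e - (m - 1)) = Suc (Suc b)"
    "nat (e + 1 - m) = Suc (Suc b)" "nat (m - a + 1) = Suc r" using r b by auto
  have p1: "phi ({a-1..m}, {m+1..e}) = 1 - (1/2) ^ (Suc (Suc r)) - (1/2) ^ Suc b"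
    using assms phi_iface[of "a-1" m e] n1 by simp
  have p2: "phi ({a..m+1}, {m+2..e}) = 1 - (1/2) ^ (Suc (Suc r)) - (1/2) ^ b"
    using assms phi_iface[of a "m+1" e] n1 by (simp add: add.assoc)
  have p3: "phi ({a..m-1}, {m..e}) = 1 - (1/2) ^ r - (1/2) ^ (Suc (Suc b))"
    using assms phi_iface[of a "m-1" e] n1 by simp
  have p4: "phi ({a..m}, {m+1..e+1}) = 1 - (1/2) ^ (Suc r) - (1/2) ^ (Suc (Suc b))"
    using assms phi_iface[of a m "e+1"] n1 by simp
  have p0: "phi ({a..m}, {m+1..e}) = 1 - (1/2) ^ (Suc r) - (1/2) ^ (Suc b)"
    using assms phi_iface[of a m e] n1 by simp
  have g4: "(\<Sum>x\<in>#{#A, B, C, D#}. phi x) = phi A + phi B + phi C + phi D" for A B C D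
    by simp
  show ?thesis
    by (simp only: moves_iface[OF assms] g4 p0 p1 p2 p3 p4) (simp add: algebra_simps)
qed

lemma size_moves_iface: "a \<le> m \<Longrightarrow> m < e \<Longrightarrow> size (moves ({a..m}, {m+1..e})) = 4"
  by (simp add: moves_iface)

lemma good_iface_cases:
  assumes "good c" "iface c"
  obtains a m e where "a \<le> m" "m < e" "c = ({a..m}, {m+1..e}) \<or> c = prod.swap ({a..m}, {m+1..e})"
proof -
  from assms(2) obtain a m e where "a \<le> m + 1" "m \<le> e" "c = ({a..m}, {m+1..e}) \<or> c = ({m+1..e}, {a..m})"
    unfolding iface_def by blast
  moreover then have "a \<le> m" "m < e" using assms(1) unfolding good_def by auto
  ultimately show ?thesis using that by auto
qed

lemma phi_sum_good_iface:
  assumes "good c" "iface c"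
  shows "(\<Sum>x\<in>#moves c. phi x) = 4 * phi c \<and> size (moves c) = 4"
proof -
  obtain a m e where am: "a \<le> m" "m < e" and c: "c = ({a..m}, {m+1..e}) \<or> c = prod.swap ({a..m}, {m+1..e})"
    using good_iface_cases[OF assms] by blast
  from c show ?thesis
  proof
    assume "c = ({a..m}, {m+1..e})"
    then show ?thesis using phi_sum_iface[OF am] size_moves_iface[OF am] by simp
  next
    assume c2: "c = prod.swap ({a..m}, {m+1..e})"
    have "(\<Sum>x\<in>#moves c. phi x) = (\<Sum>x\<in>#moves ({a..m}, {m+1..e}). phi (prod.swap x))"
      unfolding c2 moves_swap by (simp add: multiset.map_comp comp_def)
    also have "\<dots> = 4 * phi c" using phi_sum_iface[OF am] c2 by (simp add: phi_swap')
    moreover have "size (moves c) = size (moves ({a..m}, {m+1..e}))"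
      unfolding c2 moves_swap by simp
    ultimately show ?thesis using size_moves_iface[OF am] by simp
  qed
qed

lemma phi_le_W: "phi c \<le> W n c"
proof (induct n arbitrary: c)
  case 0
  then show ?case using phi_le_1 phi_bad[of c] by auto
next
  case (Suc n)
  show ?case
  proof (cases "good c \<and> iface c")
    case False
    then show ?thesis using phi_bad[of c] W_nonneg[of "Suc n" c] by (auto simp: phi_def)
  next
    case True
    then have s: "(\<Sum>x\<in>#moves c. phi x) = 4 * phi c" and sz: "size (moves c) = 4"
      using phi_sum_good_iface by auto
    then have ne: "moves c \<noteq> {#}" by auto
    have "W (Suc n) c = (\<Sum>x\<in>set_mset (moves c). pmf (pmf_of_multiset (moves c)) x * W n x)"
      using True ne by (simp add: jump_kernel_def)
    also have "\<dots> = (\<Sum>x\<in>#moves c. W n x) / 4"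
      using sum_pmf_of_multiset[OF ne] sz by simp
    finally have "W (Suc n) c = (\<Sum>x\<in>#moves c. W n x) / 4" .
    moreover have "(\<Sum>x\<in>#moves c. phi x) \<le> (\<Sum>x\<in>#moves c. W n x)"
      by (rule sum_mset_mono) (rule Suc)
    ultimately show ?thesis using s by simp
  qed
qed


lemma fill_blue_left:
  assumes fin: "finite R" "finite B" and p: "p \<in> R" and q: "q \<in> B" and pq: "p < q"
    and gap: "\<And>z. p < z \<Longrightarrow> z < q \<Longrightarrow> z \<notin> R \<and> z \<notin> B"
  shows "d \<le> nat (q - p - 1) \<Longrightarrow> reach (R, B) (R, B \<union> {q - int d..q})"
proof (induct d)
  case 0
  have "B \<union> {q..q} = B" using q by auto
  then show ?case by (simp add: reach.refl)
next
  case (Suc d)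
  define z where "z = q - int d - 1"
  have z: "p < z" "z < q" using Suc(2) pq unfolding z_def by auto
  have IH: "reach (R, B) (R, B \<union> {q - int d..q})" using Suc by simp
  have g: "good (R, B \<union> {q - int d..q})" using p q by (auto simp: good_def)
  have "make_blue (R, B \<union> {q - int d..q}) z \<in># moves (R, B \<union> {q - int d..q})"
    by (rule blue_move) (use fin gap z in \<open>auto simp: z_def\<close>)
  moreover have "make_blue (R, B \<union> {q - int d..q}) z = (R, B \<union> {q - int (Suc d)..q})"
    using gap z unfolding make_blue_def z_def by auto
  ultimately show ?case using reach_snoc[OF IH g] by simp
qed

lemma spread_red_left:
  assumes fin: "finite R" "finite B" and disj: "R \<inter> B = {}" and p: "p \<in> R" "p + 1 \<in> B"
  shows "reach (R, B) (R \<union> {p - int d..p}, B - {p - int d..p})"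
proof (induct d)
  case 0
  have "R \<union> {p..p} = R" "B - {p..p} = B" using p disj by auto
  then show ?case by (simp add: reach.refl)
next
  case (Suc d)
  define z where "z = p - int d - 1"
  define c where "c = (R \<union> {p - int d..p}, B - {p - int d..p})"
  have IH: "reach (R, B) c" using Suc by (simp add: c_def)
  show ?case
  proof (cases "z \<in> R")
    case True
    have iv: "{p - int (Suc d)..p} = insert z {p - int d..p}" unfolding z_def by auto
    have "R \<union> {p - int (Suc d)..p} = R \<union> {p - int d..p}" "B - {p - int (Suc d)..p} = B - {p - int d..p}"
      using True disj unfolding iv by auto
    then show ?thesis using IH by (simp add: c_def)
  next
    case False
    have g: "good c" using p by (auto simp: good_def c_def)
    have "make_red c z \<in># moves c"
      by (rule red_move) (use fin False in \<open>auto simp: z_def c_def\<close>)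
    moreover have "make_red c z = (R \<union> {p - int (Suc d)..p}, B - {p - int (Suc d)..p})"
      unfolding make_red_def z_def c_def by auto
    ultimately show ?thesis using reach_snoc[OF IH g] by simp
  qed
qed

lemma spread_blue_right:
  assumes fin: "finite R" "finite B" and disj: "R \<inter> B = {}" and q: "q \<in> B" "q - 1 \<in> R"
  shows "reach (R, B) (R - {q..q + int d}, B \<union> {q..q + int d})"
proof (induct d)
  case 0
  have "B \<union> {q..q} = B" "R - {q..q} = R" using q disj by auto
  then show ?case by (simp add: reach.refl)
next
  case (Suc d)
  define z where "z = q + int d + 1"
  define c where "c = (R - {q..q + int d}, B \<union> {q..q + int d})"
  have IH: "reach (R, B) c" using Suc by (simp add: c_def)
  show ?case
  proof (cases "z \<in> B")
    case True
    have iv: "{q..q + int (Suc d)} = insert z {q..q + int d}" unfolding z_def by auto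
    have "B \<union> {q..q + int (Suc d)} = B \<union> {q..q + int d}" "R - {q..q + int (Suc d)} = R - {q..q + int d}"
      using True disj unfolding iv by auto
    then show ?thesis using IH by (simp add: c_def)
  next
    case False
    have g: "good c" using q by (auto simp: good_def c_def)
    have "make_blue c z \<in># moves c"
      by (rule blue_move) (use fin False in \<open>auto simp: z_def c_def\<close>)
    moreover have "make_blue c z = (R - {q..q + int (Suc d)}, B \<union> {q..q + int (Suc d)})"
      unfolding make_blue_def z_def c_def by auto
    ultimately show ?thesis using reach_snoc[OF IH g] by simp
  qed
qed


lemma construct_oriented:
  assumes fin: "finite R" "finite B" and disj: "R \<inter> B = {}" and p: "p \<in> R" and q: "q \<in> B" and pq: "p < q"
    and gap: "\<And>z. p < z \<Longrightarrow> z < q \<Longrightarrow> z \<notin> R \<and> z \<notin> B"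
  shows "\<exists>c'. reach (R, B) c' \<and> phi c' > 0"
proof -
  define T where "T = (\<Sum>x\<in>R \<union> B. \<bar>x\<bar>)"
  have Tb: "\<bar>x\<bar> \<le> T" if "x \<in> R \<union> B" for x
    unfolding T_def using fin that by (intro member_le_sum) auto
  define L where "L = - T - \<bar>p\<bar> - 1"
  define H where "H = T + \<bar>q\<bar>"
  have L: "L < x" if "x \<in> R \<union> B" for x using Tb[OF that] unfolding L_def by auto
  have H: "x \<le> H" if "x \<in> R \<union> B" for x using Tb[OF that] unfolding H_def by auto
  have Lp: "L < p" unfolding L_def using Tb[of p] p by auto
  have Hq: "q \<le> H" unfolding H_def using Tb[of q] q by auto
  define B1 where "B1 = B \<union> {p+1..q}"
  have r1: "reach (R, B) (R, B1)"
    using fill_blue_left[OF fin p q pq gap, of "nat (q - p - 1)"] pq by (simp add: B1_def)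
  have fin1: "finite B1" using fin by (simp add: B1_def)
  have disj1: "R \<inter> B1 = {}"
  proof -
    have "x \<notin> R" if "x \<in> {p+1..q}" for x
    proof (cases "x = q")
      case True then show ?thesis using q disj by auto
    next
      case False then show ?thesis using gap[of x] that by auto
    qed
    then show ?thesis using disj unfolding B1_def by auto
  qed
  have p1: "p + 1 \<in> B1" using pq by (simp add: B1_def)
  define R2 where "R2 = R \<union> {L..p}"
  define B2 where "B2 = B1 - {L..p}"
  have r2: "reach (R, B1) (R2, B2)"
    using spread_red_left[OF fin(1) fin1 disj1 p p1, of "nat (p - L)"] Lp by (simp add: R2_def B2_def)
  have fin2: "finite R2" "finite B2" using fin fin1 by (auto simp: R2_def B2_def)
  have disj2: "R2 \<inter> B2 = {}" using disj1 by (auto simp: R2_def B2_def)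
  have q2: "p + 1 \<in> B2" "p + 1 - 1 \<in> R2" using p1 p by (auto simp: R2_def B2_def)
  have r3: "reach (R2, B2) (R2 - {p+1..H}, B2 \<union> {p+1..H})"
    using spread_blue_right[OF fin2 disj2 q2, of "nat (H - p - 1)"] pq Hq by simp
  have e1: "R2 - {p+1..H} = {L..p}" using L H Lp unfolding R2_def by fastforce
  have e2: "B2 \<union> {p+1..H} = {p+1..H}" using L H Hq pq unfolding B2_def B1_def by fastforce
  have rr: "reach (R, B) ({L..p}, {p+1..H})"
    using reach_trans[OF r1 reach_trans[OF r2 r3]] e1 e2 by simp
  have ph: "phi ({L..p}, {p+1..H}) = 1 - (1/2) ^ nat (p - L + 1) - (1/2) ^ nat (H - p)"
    using phi_iface[of L p H] Lp pq Hq by simp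
  have a1: "(1/2::real) ^ nat (p - L + 1) \<le> (1/2) ^ 2"
    by (rule power_decreasing) (use Lp in auto)
  have a2: "(1/2::real) ^ nat (H - p) \<le> (1/2) ^ 1"
    by (rule power_decreasing) (use pq Hq in auto)
  have "(1/2::real) ^ 2 = 1/4" "(1/2::real) ^ 1 = 1/2" by (simp_all add: power2_eq_square)
  then have "phi ({L..p}, {p+1..H}) > 0" using ph a1 a2 by linarith
  then show ?thesis using rr by blast
qed

lemma closest_pair:
  fixes R B :: "int set"
  assumes "finite R" "finite B" "R \<noteq> {}" "B \<noteq> {}"
  shows "\<exists>p\<in>R. \<exists>q\<in>B. \<forall>p'\<in>R. \<forall>q'\<in>B. \<bar>p - q\<bar> \<le> \<bar>p' - q'\<bar>"
proof -
  define D where "D = (\<lambda>(x, y). \<bar>x - y\<bar>) ` (R \<times> B)"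
  have fD: "finite D" "D \<noteq> {}" using assms by (auto simp: D_def)
  have "Min D \<in> D" using Min_in[OF fD] .
  then obtain p q where pq: "p \<in> R" "q \<in> B" "Min D = \<bar>p - q\<bar>" unfolding D_def by auto
  have "\<bar>p - q\<bar> \<le> \<bar>p' - q'\<bar>" if "p' \<in> R" "q' \<in> B" for p' q'
  proof -
    have "\<bar>p' - q'\<bar> \<in> D" using that unfolding D_def by force
    then show ?thesis using Min_le[OF fD(1)] pq(3) by metis
  qed
  then show ?thesis using pq by blast
qed

lemma construct:
  assumes fin: "finite R" "finite B" and disj: "R \<inter> B = {}" and ne: "R \<noteq> {}" "B \<noteq> {}"
  shows "\<exists>c'. reach (R, B) c' \<and> phi c' > 0"
proof -
  obtain p q where p: "p \<in> R" and q: "q \<in> B" and mn: "\<forall>p'\<in>R. \<forall>q'\<in>B. \<bar>p - q\<bar> \<le> \<bar>p' - q'\<bar>"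
    using closest_pair[OF fin ne] by blast
  have pne: "p \<noteq> q" using p q disj by auto
  show ?thesis
  proof (cases "p < q")
    case True
    have gap: "z \<notin> R \<and> z \<notin> B" if "p < z" "z < q" for z
    proof
      show "z \<notin> R" using mn q that by force
      show "z \<notin> B" using mn p that by force
    qed
    show ?thesis by (rule construct_oriented[OF fin disj p q True gap])
  next
    case False
    then have qp: "q < p" using pne by auto
    have gap: "z \<notin> B \<and> z \<notin> R" if "q < z" "z < p" for z
    proof
      show "z \<notin> R" using mn q that by force
      show "z \<notin> B" using mn p that by force
    qed
    have disj': "B \<inter> R = {}" using disj by auto
    obtain c' where "reach (B, R) c'" "phi c' > 0"
      using construct_oriented[OF fin(2,1) disj' q p qp gap] by blast
    then have "reach (R, B) (prod.swap c')" "phi (prod.swap c') > 0"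
      using reach_swap[of "(B, R)" c'] by auto
    then show ?thesis by blast
  qed
qed


definition Gset :: "'w measure \<Rightarrow> (nat \<Rightarrow> 'w \<Rightarrow> config) \<Rightarrow> (nat \<Rightarrow> 'w \<Rightarrow> real) \<Rightarrow> nat \<Rightarrow> nat \<Rightarrow> (nat \<Rightarrow> config) \<Rightarrow> 'w set" where
  "Gset M Y S n m h = {w \<in> space M. (\<forall>k\<le>n. Y k w = h k) \<and> (\<forall>k<n+m. 0 < S k w) \<and>
      (\<forall>k. n \<le> k \<and> k \<le> n+m \<longrightarrow> good (Y k w))}"

definition Pi_path :: "config \<Rightarrow> nat \<Rightarrow> (nat \<Rightarrow> config) \<Rightarrow> real" where
  "Pi_path c0 n h = (if h 0 = c0 then 1 else 0) * (\<Prod>k<n. pmf (jump_kernel (h k)) (h (Suc k)))"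

lemma Pi_path_nonneg: "0 \<le> Pi_path c0 n h"
  unfolding Pi_path_def by (auto intro!: prod_nonneg)

lemma Pi_path_Suc: "Pi_path c0 (Suc n) (h(Suc n := c')) = Pi_path c0 n h * pmf (jump_kernel (h n)) c'"
proof -
  have "(\<Prod>k<n. pmf (jump_kernel ((h(Suc n := c')) k)) ((h(Suc n := c')) (Suc k))) =
        (\<Prod>k<n. pmf (jump_kernel (h k)) (h (Suc k)))"
    by (intro prod.cong) auto
  then show ?thesis unfolding Pi_path_def by (simp add: algebra_simps)
qed

lemma measurable_sets:
  fixes M :: "'w measure" and Y :: "nat \<Rightarrow> 'w \<Rightarrow> config" and S :: "nat \<Rightarrow> 'w \<Rightarrow> real"
  assumes Ym: "\<And>n. Y n \<in> measurable M (count_space UNIV)"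
    and Sm[measurable]: "\<And>n. S n \<in> borel_measurable M"
  shows "Gset M Y S n m h \<in> sets M"
    "{w \<in> space M. \<forall>k\<le>n. P (Y k w)} \<in> sets M"
    "{w \<in> space M. \<forall>n. max 0 (jump_time S n w) < jump_time S (Suc n) w \<longrightarrow> P (Y n w)} \<in> sets M"
proof -
  have predY[measurable]: "Measurable.pred M (\<lambda>w. Q (Y k w))" for k and Q :: "config \<Rightarrow> bool"
    using measurable_compose[OF Ym[of k] measurable_count_space[of Q UNIV]] .
  show "Gset M Y S n m h \<in> sets M" unfolding Gset_def by measurable
  show "{w \<in> space M. \<forall>k\<le>n. P (Y k w)} \<in> sets M" by measurable
  show "{w \<in> space M. \<forall>n. max 0 (jump_time S n w) < jump_time S (Suc n) w \<longrightarrow> P (Y n w)} \<in> sets M"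
    unfolding jump_time_def by measurable
qed

lemma measure_Gset:
  fixes M :: "'w measure" and Y :: "nat \<Rightarrow> 'w \<Rightarrow> config" and S :: "nat \<Rightarrow> 'w \<Rightarrow> real"
  assumes P: "is_competition_process M c0 Y S"
  shows "Pi_path c0 n h * W m (h n) \<le> measure M (Gset M Y S n m h)"
proof -
  have ps: "prob_space M" and Ym: "\<And>n. Y n \<in> measurable M (count_space UNIV)"
    and Sm: "\<And>n. S n \<in> borel_measurable M"
    and F: "\<And>n h (s :: nat \<Rightarrow> real). (\<forall>k<n. 0 \<le> s k) \<Longrightarrow>
        measure M {w \<in> space M. (\<forall>k\<le>n. Y k w = h k) \<and> (\<forall>k<n. s k < S k w)} =
          (if h 0 = c0 then 1 else 0) *
          (\<Prod>k<n. pmf (jump_kernel (h k)) (h (Suc k)) * exp (- real (total_rate (h k)) * s k))"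
    using P unfolding is_competition_process_def by blast+
  interpret prob_space M by (rule ps)
  note GM = measurable_sets(1)[OF Ym Sm]
  show ?thesis
  proof (induct m arbitrary: n h)
    case 0
    show ?case
    proof (cases "good (h n)")
      case False then show ?thesis by simp
    next
      case True
      have "Gset M Y S n 0 h = {w \<in> space M. (\<forall>k\<le>n. Y k w = h k) \<and> (\<forall>k<n. (\<lambda>_. 0::real) k < S k w)}"
        unfolding Gset_def using True by auto
      then have "measure M (Gset M Y S n 0 h) = Pi_path c0 n h"
        using F[of n "\<lambda>_. 0" h] by (simp add: Pi_path_def)
      then show ?thesis using True by simp
    qed
  next
    case (Suc m)
    show ?case
    proof (cases "good (h n)")
      case False then show ?thesis by simp
    next
      case True
      define K where "K = jump_kernel (h n)"
      define A where "A c' = Gset M Y S (Suc n) m (h(Suc n := c'))" for c'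
      have sub: "(\<Union>c'\<in>set_pmf K. A c') \<subseteq> Gset M Y S n (Suc m) h"
      proof
        fix w assume "w \<in> (\<Union>c'\<in>set_pmf K. A c')"
        then obtain c' where w: "w \<in> Gset M Y S (Suc n) m (h(Suc n := c'))" unfolding A_def by blast
        then have a: "w \<in> space M" "\<And>k. k \<le> n \<Longrightarrow> Y k w = h k" "\<And>k. k < Suc n + m \<Longrightarrow> 0 < S k w"
          "\<And>k. Suc n \<le> k \<Longrightarrow> k \<le> Suc n + m \<Longrightarrow> good (Y k w)"
          unfolding Gset_def by auto
        have "good (Y k w)" if "n \<le> k" "k \<le> n + Suc m" for k
        proof (cases "k = n")
          case True then show ?thesis using a(2)[of n] \<open>good (h n)\<close> by simp
        next
          case False then show ?thesis using a(4)[of k] that by simp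
        qed
        then show "w \<in> Gset M Y S n (Suc m) h" unfolding Gset_def using a by auto
      qed
      have disj: "disjoint_family_on A (set_pmf K)"
      proof (unfold disjoint_family_on_def, intro ballI impI)
        fix c1 c2 :: config assume "c1 \<in> set_pmf K" "c2 \<in> set_pmf K" "c1 \<noteq> c2"
        show "A c1 \<inter> A c2 = {}"
        proof (rule ccontr)
          assume "A c1 \<inter> A c2 \<noteq> {}"
          then obtain w where "w \<in> A c1" "w \<in> A c2" by blast
          then have "Y (Suc n) w = c1" "Y (Suc n) w = c2" unfolding A_def Gset_def by auto
          then show False using \<open>c1 \<noteq> c2\<close> by simp
        qed
      qed
      have "Pi_path c0 n h * W (Suc m) (h n) = (\<Sum>c'\<in>set_pmf K. Pi_path c0 (Suc n) (h(Suc n := c')) * W m c')"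
        using True by (simp add: K_def Pi_path_Suc sum_distrib_left algebra_simps)
      also have "\<dots> \<le> (\<Sum>c'\<in>set_pmf K. measure M (A c'))"
      proof (rule sum_mono)
        fix c' show "Pi_path c0 (Suc n) (h(Suc n := c')) * W m c' \<le> measure M (A c')"
          unfolding A_def using Suc[of "Suc n" "h(Suc n := c')"] unfolding fun_upd_same .
      qed
      also have "\<dots> = measure M (\<Union>c'\<in>set_pmf K. A c')"
        using finite_set_K disj GM unfolding A_def K_def
        by (intro finite_measure_finite_Union[symmetric]) auto
      also have "\<dots> \<le> measure M (Gset M Y S n (Suc m) h)"
        by (rule finite_measure_mono[OF sub GM])
      finally show ?thesis .
    qed
  qed
qed

theorem mainTheorem2:
  fixes M :: "'w measure" and R0 B0 :: "int set"
    and Y :: "nat \<Rightarrow> 'w \<Rightarrow> config" and S :: "nat \<Rightarrow> 'w \<Rightarrow> real"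
  assumes "finite R0" and "finite B0" and "R0 \<inter> B0 = {}"
    and "R0 \<noteq> {}" and "B0 \<noteq> {}"
    and "is_competition_process M (R0, B0) Y S"
  shows "measure M (mutual_survival M Y S) > 0"
proof -
  note P = assms(6)
  have ps: "prob_space M" and Ym: "\<And>n. Y n \<in> measurable M (count_space UNIV)"
    and Sm: "\<And>n. S n \<in> borel_measurable M"
    using P unfolding is_competition_process_def by blast+
  interpret prob_space M by (rule ps)
  define c0 where "c0 = (R0, B0)"
  obtain c' where rc: "reach c0 c'" and pc: "phi c' > 0"
    using construct[OF assms(1-5)] unfolding c0_def by blast
  obtain p m0 where p: "p > 0" and pW: "\<And>n. p * W n c' \<le> W (n + m0) c0"
    using reach_W[OF rc] by blast
  define \<delta> where "\<delta> = p * phi c'"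
  have dpos: "\<delta> > 0" using p pc by (simp add: \<delta>_def)
  define E where "E n = {w \<in> space M. \<forall>k\<le>n. good (Y k w)}" for n
  have Em: "E n \<in> sets M" for n unfolding E_def by (rule measurable_sets(2)[OF Ym Sm])
  have Edec: "decseq E" unfolding decseq_def E_def by auto
  have WE: "W n c0 \<le> measure M (E n)" for n
  proof -
    have "Pi_path c0 0 (\<lambda>_. c0) * W n c0 \<le> measure M (Gset M Y S 0 n (\<lambda>_. c0))"
      using measure_Gset[OF P[folded c0_def], of 0 "\<lambda>_. c0" n] by simp
    moreover have "Pi_path c0 0 (\<lambda>_. c0) = 1" by (simp add: Pi_path_def)
    moreover have "Gset M Y S 0 n (\<lambda>_. c0) \<subseteq> E n" unfolding Gset_def E_def by auto
    moreover have "measure M (Gset M Y S 0 n (\<lambda>_. c0)) \<le> measure M (E n)"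
      by (rule finite_measure_mono[OF calculation(3) Em])
    ultimately show ?thesis by simp
  qed
  have Eb: "\<delta> \<le> measure M (E n)" for n
  proof -
    have "\<delta> \<le> p * W (n) c'" unfolding \<delta>_def using p phi_le_W by simp
    also have "\<dots> \<le> W (n + m0) c0" by (rule pW)
    also have "\<dots> \<le> measure M (E (n + m0))" by (rule WE)
    also have "\<dots> \<le> measure M (E n)" using Edec Em by (intro finite_measure_mono) (auto simp: decseq_def)
    finally show ?thesis .
  qed
  have lim: "(\<lambda>n. measure M (E n)) \<longlonglongrightarrow> measure M (\<Inter>n. E n)"
    using Em Edec by (intro finite_Lim_measure_decseq) auto
  have "\<delta> \<le> measure M (\<Inter>n. E n)"
    by (rule LIMSEQ_le_const[OF lim]) (use Eb in auto)
  moreover have MS: "mutual_survival M Y S = {w \<in> space M. \<forall>n. max 0 (jump_time S n w) < jump_time S (Suc n) w \<longrightarrow> good (Y n w)}"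
    unfolding mutual_survival_def state_at_def good_def
  proof (intro Collect_cong conj_cong refl iffI allI impI)
    fix w n
    assume h: "\<forall>t\<ge>0. \<forall>c. (\<exists>n. jump_time S n w \<le> t \<and> t < jump_time S (Suc n) w \<and> Y n w = c) \<longrightarrow> fst c \<noteq> {} \<and> snd c \<noteq> {}"
      and "max 0 (jump_time S n w) < jump_time S (Suc n) w"
    have ex: "\<exists>n'. jump_time S n' w \<le> max 0 (jump_time S n w) \<and> max 0 (jump_time S n w) < jump_time S (Suc n') w \<and> Y n' w = Y n w"
      by (intro exI[of _ n]) (use \<open>max 0 (jump_time S n w) < jump_time S (Suc n) w\<close> in auto)
    have t0: "0 \<le> max 0 (jump_time S n w)" by simp
    show "fst (Y n w) \<noteq> {} \<and> snd (Y n w) \<noteq> {}"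
      using h t0 ex by blast
  next
    fix w t c
    assume h: "\<forall>n. max 0 (jump_time S n w) < jump_time S (Suc n) w \<longrightarrow> fst (Y n w) \<noteq> {} \<and> snd (Y n w) \<noteq> {}"
      and t: "0 \<le> t" and ex: "\<exists>n. jump_time S n w \<le> t \<and> t < jump_time S (Suc n) w \<and> Y n w = c"
    then obtain n where "jump_time S n w \<le> t" "t < jump_time S (Suc n) w" "Y n w = c" by blast
    then show "fst c \<noteq> {} \<and> snd c \<noteq> {}" using h[rule_format, of n] t by auto
  qed
  have MSm: "mutual_survival M Y S \<in> sets M" unfolding MS by (rule measurable_sets(3)[OF Ym Sm])
  have "(\<Inter>n. E n) \<subseteq> mutual_survival M Y S"
  proof
    fix w assume "w \<in> (\<Inter>n. E n)"
    then have "w \<in> space M" "\<And>n. good (Y n w)" unfolding E_def by auto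
    then show "w \<in> mutual_survival M Y S" unfolding MS by auto
  qed
  then have "measure M (\<Inter>n. E n) \<le> measure M (mutual_survival M Y S)"
    by (rule finite_measure_mono[OF _ MSm])
  ultimately show ?thesis using dpos by linarith
qed

end
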